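(* Consider a fixed user set ($\delta_i^t=1$ for all users and all rounds) and let the recommendation lists in every round be produced by F-FAST. Then the variance of the Top-$N$ Fairness values among all users, $$D(F_i^T) = \frac{1}{n}\sum_{u_i\in U}\Big(F_i^T - \frac{1}{n}\sum_{u_k\in U}F_k^T\Big)^2,$$ converges to $0$ as the number of recommendation rounds $T \to \infty$.
   Context: Services $S=\{s_1,\dots,s_m\}$ with capacity constraints $c_1,\dots,c_m$ (nonnegative integers: the maximum number of users to whom $s_j$ may be recommended in one round); users $U=\{u_1,\dots,u_n\}$. Each user $u_i$ has a fixed original ranked recommendation list $l_i$ (produced from a predicted rating matrix $R=(r_{i,j})$), and $l(N)_i$ denotes the sub-list of its top $N$ services. For each service $s_j$, $U_j=\{u_i : s_j \in l(N)_i\}$. In round $t$ the system outputs a list $l_i^t$ to user $u_i$; $\delta_i^t\in\{0,1\}$ indicates whether $u_i$ uses the system in round $t$. $In\_tn(s_j,list,N)$ equals $1$ if $s_j$ is in the top-$N$ sub-list of $list$ and $0$ otherwise. Overall appearance probability: $p_j^T = \dfrac{\sum_{u_i\in U_j}\sum_{t=0}^T \delta_i^t\, In\_tn(s_j,l_i^t,N)}{\sum_{u_i\in U_j}\sum_{t=0}^T \delta_i^t}$. Actual appearance probability: $p_{i,j}^T = \dfrac{\sum_{t=0}^T \delta_i^t\, In\_tn(s_j,l_i^t,N)}{\sum_{t=0}^T \delta_i^t}$. Service fairness degree: $F_{i,j}^T = \dfrac{p_{i,j}^T - p_j^T}{p_j^T}$. Top-$N$ Fairness: $F_i^T = \sum_{s_j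 \in l(N)_i} F_{i,j}^T$. F-FAST (one round $T$): start with empty lists and remaining capacities $c_j$. Repeatedly pick the user with the lowest current Top-$N$ Fairness value; go through that user's $l(N)_i$ in rank order and insert into $l_i^T$ the first service $s_j$ with remaining capacity $c_j>0$ (not yet attempted for this user), decrement $c_j$, and update that user's Top-$N$ Fairness value (accounting for the assignment); then re-sort users by their Top-$N$ Fairness and repeat. The round ends when every service in every user's $l(N)_i$ has been attempted or all capacities are exhausted; finally the remaining positions of each $l_i^T$ are filled with the services at positions larger than $N$ in $l_i$, in order. *)

theory Defs
  imports Complex_Main
begin

text \<open>Services are 0..<m, users are 0..<n. Lists output in the rounds: L t i = list output to user i in round t.
delta i t = participation indicator of user i in round t (as a real 0/1).\<close>

definition In_tn :: "nat \<Rightarrow> nat list \<Rightarrow> nat \<Rightarrow> real" where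
  "In_tn j xs N = (if j \<in> set (take N xs) then 1 else 0)"

definition Uset :: "nat \<Rightarrow> nat \<Rightarrow> (nat \<Rightarrow> nat list) \<Rightarrow> nat \<Rightarrow> nat set" where
  "Uset n N l j = {i. i < n \<and> j \<in> set (take N (l i))}"

definition overall_prob ::
  "nat \<Rightarrow> nat \<Rightarrow> (nat \<Rightarrow> nat list) \<Rightarrow> (nat \<Rightarrow> nat \<Rightarrow> real) \<Rightarrow> (nat \<Rightarrow> nat \<Rightarrow> nat list)
   \<Rightarrow> nat \<Rightarrow> nat \<Rightarrow> real" where
  "overall_prob n N l \<delta> L T j =
     (\<Sum>i\<in>Uset n N l j. \<Sum>t\<le>T. \<delta> i t * In_tn j (L t i) N) /
     (\<Sum>i\<in>Uset n N l j. \<Sum>t\<le>T. \<delta> i t)"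

definition actual_prob ::
  "nat \<Rightarrow> (nat \<Rightarrow> nat \<Rightarrow> real) \<Rightarrow> (nat \<Rightarrow> nat \<Rightarrow> nat list) \<Rightarrow> nat \<Rightarrow> nat \<Rightarrow> nat \<Rightarrow> real" where
  "actual_prob N \<delta> L T i j =
     (\<Sum>t\<le>T. \<delta> i t * In_tn j (L t i) N) / (\<Sum>t\<le>T. \<delta> i t)"

definition fairness_degree ::
  "nat \<Rightarrow> nat \<Rightarrow> (nat \<Rightarrow> nat list) \<Rightarrow> (nat \<Rightarrow> nat \<Rightarrow> real) \<Rightarrow> (nat \<Rightarrow> nat \<Rightarrow> nat list)
   \<Rightarrow> nat \<Rightarrow> nat \<Rightarrow> nat \<Rightarrow> real" where
  "fairness_degree n N l \<delta> L T i j =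
     (actual_prob N \<delta> L T i j - overall_prob n N l \<delta> L T j) / overall_prob n N l \<delta> L T j"

definition topN_fairness ::
  "nat \<Rightarrow> nat \<Rightarrow> (nat \<Rightarrow> nat list) \<Rightarrow> (nat \<Rightarrow> nat \<Rightarrow> real) \<Rightarrow> (nat \<Rightarrow> nat \<Rightarrow> nat list)
   \<Rightarrow> nat \<Rightarrow> nat \<Rightarrow> real" where
  "topN_fairness n N l \<delta> L T i = (\<Sum>j\<in>set (take N (l i)). fairness_degree n N l \<delta> L T i j)"

text \<open>The state consists of the
partially built lists A (services inserted so far in round T), the remaining
capacities cap, and the current Top-N fairness keys f of the users.\<close>

definition one_delta :: "nat \<Rightarrow> nat \<Rightarrow> real" where
  "one_delta i t = 1"

definition ffast_key ::
  "nat \<Rightarrow> nat \<Rightarrow> (nat \<Rightarrow> nat list) \<Rightarrow> (nat \<Rightarrow> nat \<Rightarrow> nat list) \<Rightarrow> nat \<Rightarrow> (nat \<Rightarrow> nat list)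
   \<Rightarrow> nat \<Rightarrow> real" where
  "ffast_key n N l L T A i =
     topN_fairness n N l one_delta (\<lambda>t. if t < T then L t else A) T i"

definition ffast_eligible ::
  "nat \<Rightarrow> nat \<Rightarrow> (nat \<Rightarrow> nat list) \<Rightarrow> (nat \<Rightarrow> nat list) \<Rightarrow> (nat \<Rightarrow> nat) \<Rightarrow> nat set" where
  "ffast_eligible n N l A cap =
     {i. i < n \<and> (\<exists>j\<in>set (take N (l i)). j \<notin> set (A i) \<and> 0 < cap j)}"

definition ffast_step ::
  "nat \<Rightarrow> nat \<Rightarrow> (nat \<Rightarrow> nat list) \<Rightarrow> (nat \<Rightarrow> nat \<Rightarrow> nat list) \<Rightarrow> nat
   \<Rightarrow> (nat \<Rightarrow> nat list) \<times> (nat \<Rightarrow> nat) \<times> (nat \<Rightarrow> real)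
   \<Rightarrow> (nat \<Rightarrow> nat list) \<times> (nat \<Rightarrow> nat) \<times> (nat \<Rightarrow> real)" where
  "ffast_step n N l L T st =
     (case st of (A, cap, f) \<Rightarrow>
       (let E = ffast_eligible n N l A cap in
        if E = {} then (A, cap, f)
        else
          (let i = (LEAST i. i \<in> E \<and> (\<forall>k\<in>E. f i \<le> f k));
               j = hd (filter (\<lambda>j. j \<notin> set (A i) \<and> 0 < cap j) (take N (l i)));
               A' = A(i := A i @ [j]);
               cap' = cap(j := cap j - 1);
               f' = f(i := ffast_key n N l L T A' i)
           in (A', cap', f'))))"

text \<open>Every effective step inserts a new service of some user's top-N list, so after
n*N steps the round has ended (further steps are the identity).\<close>
definition ffast_round ::
  "nat \<Rightarrow> nat \<Rightarrow> (nat \<Rightarrow> nat list) \<Rightarrow> (nat \<Rightarrow> nat) \<Rightarrow> (nat \<Rightarrow> nat \<Rightarrow> nat list) \<Rightarrow> nat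
   \<Rightarrow> (nat \<Rightarrow> nat list)" where
  "ffast_round n N l c L T =
     (let A0 = (\<lambda>_. []);
          st = (ffast_step n N l L T ^^ (n * N)) (A0, c, \<lambda>i. ffast_key n N l L T A0 i)
      in (\<lambda>i. fst st i @ drop N (l i)))"

fun ffast_hist ::
  "nat \<Rightarrow> nat \<Rightarrow> (nat \<Rightarrow> nat list) \<Rightarrow> (nat \<Rightarrow> nat) \<Rightarrow> nat \<Rightarrow> (nat \<Rightarrow> nat \<Rightarrow> nat list)" where
  "ffast_hist n N l c 0 = (\<lambda>t i. [])"
| "ffast_hist n N l c (Suc T) =
     (ffast_hist n N l c T)(T := ffast_round n N l c (ffast_hist n N l c T) T)"

definition ffast_lists ::
  "nat \<Rightarrow> nat \<Rightarrow> (nat \<Rightarrow> nat list) \<Rightarrow> (nat \<Rightarrow> nat) \<Rightarrow> nat \<Rightarrow> nat \<Rightarrow> nat list" where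
  "ffast_lists n N l c t = ffast_hist n N l c (Suc t) t"

definition fairness_variance :: "nat \<Rightarrow> (nat \<Rightarrow> real) \<Rightarrow> real" where
  "fairness_variance n F = (1 / real n) * (\<Sum>i<n. (F i - (1 / real n) * (\<Sum>k<n. F k))\<^sup>2)"

end

theory Submission
  imports Defs
begin

locale ff =
  fixes n m N :: nat and c :: "nat \<Rightarrow> nat" and l :: "nat \<Rightarrow> nat list"
  assumes npos: "0 < n"
    and ldist: "\<forall>i<n. distinct (l i) \<and> set (l i) = {..<m}"
begin

definition tp :: "nat \<Rightarrow> nat set" where "tp i = set (take N (l i))"
definition UU :: "nat \<Rightarrow> nat set" where "UU j = Uset n N l j"
definition kk :: "nat \<Rightarrow> nat" where "kk j = min (c j) (card (UU j))"
definition ww :: "nat \<Rightarrow> real" where "ww j = real (card (UU j)) / real (kk j)"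

abbreviation H where "H \<equiv> ffast_hist n N l c"

definition cnt :: "nat \<Rightarrow> nat \<Rightarrow> nat \<Rightarrow> real" where
  "cnt T i j = (\<Sum>t<T. In_tn j (H T t i) N)"

definition GG :: "nat \<Rightarrow> nat \<Rightarrow> real" where
  "GG T i = (\<Sum>j\<in>{j\<in>tp i. 0 < kk j}. ww j * cnt T i j - real T)"

lemma UU_sub: "UU j \<subseteq> {..<n}" by (auto simp: UU_def Uset_def)
lemma finite_UU[simp]: "finite (UU j)" using UU_sub finite_subset by blast
lemma UU_iff: "i \<in> UU j \<longleftrightarrow> i < n \<and> j \<in> tp i" by (auto simp: UU_def Uset_def tp_def)
lemma finite_tp[simp]: "finite (tp i)" by (simp add: tp_def)
lemma card_tp: "card (tp i) \<le> N"
  unfolding tp_def by (rule order_trans[OF card_length]) simp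
lemma card_UU: "card (UU j) \<le> n" using card_mono[OF _ UU_sub] by simp
lemma tp_sub: assumes "i < n" shows "tp i \<subseteq> {..<m}"
proof -
  have "set (l i) = {..<m}" using ldist assms by blast
  then show ?thesis unfolding tp_def using set_take_subset[of N "l i"] by simp
qed

definition inv_ab :: "(nat \<Rightarrow> nat list) \<Rightarrow> (nat \<Rightarrow> nat) \<Rightarrow> bool" where
  "inv_ab A cap \<longleftrightarrow> (\<forall>i<n. distinct (A i) \<and> set (A i) \<subseteq> tp i) \<and>
     (\<forall>j. cap j + card {i. i < n \<and> j \<in> set (A i)} = c j)"

abbreviation E where "E A cap \<equiv> ffast_eligible n N l A cap"

lemma E_sub: "E A cap \<subseteq> {..<n}" by (auto simp: ffast_eligible_def)
lemma finite_E[simp]: "finite (E A cap)" using E_sub finite_subset by blast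

lemma step_cases:
  fixes L T A cap f
  defines "st \<equiv> (A, cap, f)"
  shows "(E A cap = {} \<and> ffast_step n N l L T st = st) \<or>
    (\<exists>i j. i \<in> E A cap \<and> (\<forall>k\<in>E A cap. f i \<le> f k) \<and> j \<in> tp i \<and> j \<notin> set (A i) \<and> 0 < cap j \<and>
      ffast_step n N l L T st = (A(i := A i @ [j]), cap(j := cap j - 1),
          f(i := ffast_key n N l L T (A(i := A i @ [j])) i)))"
proof (cases "E A cap = {}")
  case True
  then show ?thesis by (simp add: st_def ffast_step_def)
next
  case False
  define EE where "EE = E A cap"
  have fin: "finite (f ` EE)" by (simp add: EE_def)
  have ne: "f ` EE \<noteq> {}" using False by (simp add: EE_def)
  obtain x where x: "x \<in> EE" "f x = Min (f ` EE)" using Min_in[OF fin ne] by auto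
  have xm: "x \<in> EE \<and> (\<forall>k\<in>EE. f x \<le> f k)" using x fin by auto
  define i where "i = (LEAST i. i \<in> EE \<and> (\<forall>k\<in>EE. f i \<le> f k))"
  have ii: "i \<in> EE \<and> (\<forall>k\<in>EE. f i \<le> f k)" unfolding i_def by (rule LeastI[of _ x], rule xm)
  define P where "P = (\<lambda>j. j \<notin> set (A i) \<and> 0 < cap j)"
  have "\<exists>j\<in>set (take N (l i)). P j" using ii by (auto simp: EE_def ffast_eligible_def P_def)
  then have fne: "filter P (take N (l i)) \<noteq> []" by (simp add: filter_empty_conv)
  define j where "j = hd (filter P (take N (l i)))"
  have "j \<in> set (filter P (take N (l i)))" using fne hd_in_set unfolding j_def by blast
  then have jj: "j \<in> tp i" "P j" by (auto simp: tp_def)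
  have "ffast_step n N l L T st = (A(i := A i @ [j]), cap(j := cap j - 1),
          f(i := ffast_key n N l L T (A(i := A i @ [j])) i))"
    using False by (simp add: st_def ffast_step_def Let_def i_def j_def P_def EE_def)
  note eq = this
  show ?thesis
    apply (rule disjI2, rule exI[of _ i], rule exI[of _ j])
    using eq ii jj unfolding EE_def P_def by blast
qed

lemma inv_ab_step:
  assumes inv: "inv_ab A cap" and i: "i < n" and j: "j \<in> tp i" "j \<notin> set (A i)" "0 < cap j"
  shows "inv_ab (A(i := A i @ [j])) (cap(j := cap j - 1))"
proof -
  have a: "\<forall>i'<n. distinct ((A(i := A i @ [j])) i') \<and> set ((A(i := A i @ [j])) i') \<subseteq> tp i'"
    using inv j unfolding inv_ab_def by auto
  have b: "(cap(j := cap j - 1)) j' + card {i'. i' < n \<and> j' \<in> set ((A(i := A i @ [j])) i')} = c j'" for j'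
  proof (cases "j' = j")
    case True
    have "{i'. i' < n \<and> j' \<in> set ((A(i := A i @ [j])) i')} = insert i {i'. i' < n \<and> j' \<in> set (A i')}"
      using True i by auto
    moreover have "i \<notin> {i'. i' < n \<and> j' \<in> set (A i')}" using True j by auto
    moreover have "finite {i'. i' < n \<and> j' \<in> set (A i')}" by simp
    ultimately have "card {i'. i' < n \<and> j' \<in> set ((A(i := A i @ [j])) i')} = Suc (card {i'. i' < n \<and> j' \<in> set (A i')})"
      by simp
    then show ?thesis using True inv j(3) unfolding inv_ab_def by (metis Suc_diff_1 add_Suc fun_upd_same add_Suc_right)
  next
    case False
    have "{i'. i' < n \<and> j' \<in> set ((A(i := A i @ [j])) i')} = {i'. i' < n \<and> j' \<in> set (A i')}"
      using False by auto
    then show ?thesis using False inv unfolding inv_ab_def by simp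
  qed
  show ?thesis using a b unfolding inv_ab_def by blast
qed

definition total :: "(nat \<Rightarrow> nat list) \<Rightarrow> nat" where "total A = (\<Sum>i<n. length (A i))"

lemma len_le: assumes "inv_ab A cap" "i < n" shows "length (A i) \<le> N"
proof -
  have "length (A i) = card (set (A i))" using assms distinct_card unfolding inv_ab_def by metis
  also have "\<dots> \<le> card (tp i)" using assms by (intro card_mono) (auto simp: inv_ab_def)
  finally show ?thesis using card_tp order_trans by blast
qed

lemma len_lt: assumes "inv_ab A cap" "i \<in> E A cap" shows "length (A i) < N"
proof -
  have i: "i < n" using assms E_sub by blast
  obtain j where j: "j \<in> tp i" "j \<notin> set (A i)" using assms(2) by (auto simp: ffast_eligible_def tp_def)
  have "length (A i) = card (set (A i))" using assms i distinct_card unfolding inv_ab_def by metis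
  also have "\<dots> < card (tp i)" using assms i j by (intro psubset_card_mono) (auto simp: inv_ab_def)
  finally show ?thesis using card_tp[of i] by linarith
qed

lemma total_upd: assumes "i < n" shows "total (A(i := A i @ [j])) = Suc (total A)"
proof -
  have "total (A(i := A i @ [j])) = (\<Sum>x<n. length (A x) + (if x = i then 1 else 0))"
    unfolding total_def by (rule sum.cong) auto
  also have "\<dots> = total A + 1" using assms by (simp add: sum.distrib total_def)
  finally show ?thesis by simp
qed

lemma total_lt: assumes "inv_ab A cap" "E A cap \<noteq> {}" shows "total A < n * N"
proof -
  obtain i where i: "i \<in> E A cap" using assms by blast
  have i': "i < n" using i E_sub by blast
  have "total A < (\<Sum>x<n. N)" unfolding total_def
    using len_le[OF assms(1)] len_lt[OF assms(1) i] i'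
    by (intro sum_strict_mono_ex1) auto
  then show ?thesis by simp
qed

definition st0 :: "(nat \<Rightarrow> nat \<Rightarrow> nat list) \<Rightarrow> nat \<Rightarrow> _" where
  "st0 L T = ((\<lambda>_. []), c, \<lambda>i. ffast_key n N l L T (\<lambda>_. []) i)"

abbreviation stk where "stk L T k \<equiv> (ffast_step n N l L T ^^ k) (st0 L T)"

lemma iter_ab: "inv_ab (fst (stk L T k)) (fst (snd (stk L T k))) \<and>
   (E (fst (stk L T k)) (fst (snd (stk L T k))) = {} \<or> total (fst (stk L T k)) = k)"
proof (induction k)
  case 0
  show ?case by (simp add: st0_def inv_ab_def total_def)
next
  case (Suc k)
  obtain A cap f where st: "stk L T k = (A, cap, f)" by (cases "stk L T k") auto
  have eq: "stk L T (Suc k) = ffast_step n N l L T (A, cap, f)" using st by simp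
  have inv: "inv_ab A cap" and tt: "E A cap = {} \<or> total A = k" using Suc st by auto
  from step_cases[where L=L and T=T and A=A and cap=cap and f=f] show ?case
  proof
    assume "E A cap = {} \<and> ffast_step n N l L T (A, cap, f) = (A, cap, f)"
    then show ?case using eq inv by simp
  next
    assume "\<exists>i j. i \<in> E A cap \<and> (\<forall>k\<in>E A cap. f i \<le> f k) \<and> j \<in> tp i \<and> j \<notin> set (A i) \<and> 0 < cap j \<and>
      ffast_step n N l L T (A, cap, f) = (A(i := A i @ [j]), cap(j := cap j - 1),
          f(i := ffast_key n N l L T (A(i := A i @ [j])) i))"
    then obtain i j where ij: "i \<in> E A cap" "j \<in> tp i" "j \<notin> set (A i)" "0 < cap j"
      and st': "ffast_step n N l L T (A, cap, f) = (A(i := A i @ [j]), cap(j := cap j - 1),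
          f(i := ffast_key n N l L T (A(i := A i @ [j])) i))" by blast
    have i: "i < n" using ij E_sub by blast
    have "total A = k" using tt ij by auto
    then have t: "total (A(i := A i @ [j])) = Suc k" using total_upd[OF i] by simp
    have new: "stk L T (Suc k) = (A(i := A i @ [j]), cap(j := cap j - 1),
          f(i := ffast_key n N l L T (A(i := A i @ [j])) i))" using eq st' by simp
    show ?case unfolding new fst_conv snd_conv using inv_ab_step[OF inv i ij(2-4)] t by blast
  qed
qed

lemma final_ab:
  fixes L :: "nat \<Rightarrow> nat \<Rightarrow> nat list" and T :: nat
  defines "fs \<equiv> stk L T (n * N)"
  shows "inv_ab (fst fs) (fst (snd fs))" "E (fst fs) (fst (snd fs)) = {}"
proof -
  show inv: "inv_ab (fst fs) (fst (snd fs))" using iter_ab unfolding fs_def by blast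
  show "E (fst fs) (fst (snd fs)) = {}"
  proof (rule ccontr)
    assume ne: "E (fst fs) (fst (snd fs)) \<noteq> {}"
    then have "total (fst fs) = n * N" using iter_ab unfolding fs_def by blast
    moreover have "total (fst fs) < n * N" using total_lt[OF inv ne] .
    ultimately show False by simp
  qed
qed

lemma H_Suc: "H (Suc T) = (H T)(T := ffast_round n N l c (H T) T)" by (rule ffast_hist.simps(2))

lemma round_eq: "ffast_round n N l c L T = (\<lambda>i. fst (stk L T (n * N)) i @ drop N (l i))"
  unfolding ffast_round_def st0_def Let_def by (rule refl)

lemma In_tn_01: "In_tn j xs N = (if j \<in> set (take N xs) then 1 else 0)"
  by (simp add: In_tn_def)

lemma cnt_Suc: "cnt (Suc T) i j = cnt T i j + In_tn j (ffast_round n N l c (H T) T i) N"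
proof -
  have "cnt (Suc T) i j = (\<Sum>t<T. In_tn j (H (Suc T) t i) N) + In_tn j (H (Suc T) T i) N"
    unfolding cnt_def by simp
  also have "(\<Sum>t<T. In_tn j (H (Suc T) t i) N) = cnt T i j"
    unfolding cnt_def H_Suc by (rule sum.cong) auto
  finally show ?thesis by (simp add: H_Suc)
qed

lemma cnt_nonneg: "0 \<le> cnt T i j" unfolding cnt_def In_tn_def by (rule sum_nonneg) simp
lemma cnt_le: "cnt T i j \<le> real T"
proof -
  have "cnt T i j \<le> (\<Sum>t<T. 1)" unfolding cnt_def In_tn_def by (rule sum_mono) simp
  then show ?thesis by simp
qed

lemma In_final:
  assumes inv: "inv_ab A cap" and i: "i < n" and j: "j \<in> tp i"
  shows "In_tn j (A i @ drop N (l i)) N = (if j \<in> set (A i) then 1 else 0)"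
proof -
  have len: "length (A i) \<le> N" using len_le[OF inv i] .
  have "take N (A i @ drop N (l i)) = A i @ take (N - length (A i)) (drop N (l i))"
    using len by simp
  moreover have "j \<notin> set (drop N (l i))"
    using set_take_disj_set_drop_if_distinct[of "l i" N N] ldist i j unfolding tp_def by blast
  moreover have "set (take (N - length (A i)) (drop N (l i))) \<subseteq> set (drop N (l i))"
    by (rule set_take_subset)
  ultimately show ?thesis unfolding In_tn_def by auto
qed

lemma round_card:
  assumes inv: "inv_ab A cap" and e: "E A cap = {}"
  shows "card {i \<in> UU j. j \<in> set (A i)} = kk j"
proof -
  define S where "S = {i \<in> UU j. j \<in> set (A i)}"
  have sub: "\<forall>i<n. set (A i) \<subseteq> tp i" using inv unfolding inv_ab_def by blast
  have QS: "{i. i < n \<and> j \<in> set (A i)} = S"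
    unfolding S_def UU_iff using sub by blast
  have "cap j + card {i. i < n \<and> j \<in> set (A i)} = c j" using inv unfolding inv_ab_def by blast
  then have cs: "cap j + card S = c j" using QS by simp
  have SU: "S \<subseteq> UU j" unfolding S_def by auto
  have cSU: "card S \<le> card (UU j)" using SU by (simp add: card_mono)
  have all: "\<forall>i\<in>UU j. j \<in> set (A i) \<or> cap j = 0"
  proof
    fix i assume "i \<in> UU j"
    then have i: "i < n" "j \<in> tp i" by (simp_all add: UU_iff)
    show "j \<in> set (A i) \<or> cap j = 0"
    proof (rule ccontr)
      assume "\<not> (j \<in> set (A i) \<or> cap j = 0)"
      then have "i \<in> E A cap" using i unfolding ffast_eligible_def tp_def by auto
      with e show False by simp
    qed
  qed
  show ?thesis
  proof (cases "cap j = 0")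
    case True
    then show ?thesis using cs cSU unfolding kk_def S_def by simp
  next
    case False
    then have "S = UU j" using all SU unfolding S_def by auto
    then show ?thesis using cs unfolding kk_def S_def by simp
  qed
qed

lemma final_props:
  fixes T :: nat
  defines "A \<equiv> fst (stk (H T) T (n * N))"
  shows "\<exists>cap. inv_ab A cap \<and> E A cap = {}"
    "\<And>i. ffast_round n N l c (H T) T i = A i @ drop N (l i)"
  using final_ab[of "H T" T] round_eq[of "H T" T] unfolding A_def by auto

lemma cnt_sum: "(\<Sum>i\<in>UU j. cnt T i j) = real (kk j) * real T"
proof (induction T)
  case 0
  show ?case by (simp add: cnt_def)
next
  case (Suc T)
  define A where "A = fst (stk (H T) T (n * N))"
  obtain cap where inv: "inv_ab A cap" and e: "E A cap = {}" using final_props(1)[of T] unfolding A_def by blast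
  have r: "ffast_round n N l c (H T) T i = A i @ drop N (l i)" for i using final_props(2)[of T] unfolding A_def by blast
  have "(\<Sum>i\<in>UU j. cnt (Suc T) i j) = (\<Sum>i\<in>UU j. cnt T i j) + (\<Sum>i\<in>UU j. if j \<in> set (A i) then 1 else 0)"
    unfolding cnt_Suc r sum.distrib
    by (intro arg_cong2[where f="(+)"] refl sum.cong) (simp_all add: UU_iff In_final[OF inv])
  also have "(\<Sum>i\<in>UU j. if j \<in> set (A i) then 1 else (0::real)) = real (card {i \<in> UU j. j \<in> set (A i)})"
    by (simp add: sum.If_cases Int_def)
  also have "\<dots> = real (kk j)" using round_card[OF inv e] by simp
  finally show ?case using Suc.IH by (simp add: algebra_simps)
qed

lemma tb:
  fixes x :: real and T r k u :: nat and e :: real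
  assumes x0: "0 \<le> x" and xT: "x \<le> real T" and e: "e = 0 \<or> e = 1" and rk: "r \<le> k" and k1: "1 \<le> k" and ku: "k \<le> u"
  defines "a \<equiv> (x + e) / (real T + 1)" and "ov \<equiv> (real k * real T + real r) / (real u * (real T + 1))"
  shows "real u / real k * x - real T - 1 \<le> (a - ov) / ov * (real T + 1)"
    and "(a - ov) / ov * (real T + 1) \<le> real u / real k * x - real T + 3 * real u"
proof -
  define D where "D = real k * real T + real r"
  have u0: "0 < real u" using k1 ku by simp
  have k0: "0 < real k" using k1 by simp
  have e0: "0 \<le> e" "e \<le> 1" using e by auto
  have "(a - ov) / ov * (real T + 1) \<le> real u / real k * x - real T + 3 * real u \<and>
        real u / real k * x - real T - 1 \<le> (a - ov) / ov * (real T + 1)"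
  proof (cases "D = 0")
    case True
    then have "T = 0" "r = 0" using k1 unfolding D_def by (auto simp: add_nonneg_eq_0_iff)
    then have "ov = 0" unfolding ov_def by simp
    then show ?thesis using x0 xT u0 \<open>T = 0\<close> by simp
  next
    case False
    moreover have "0 \<le> D" unfolding D_def by simp
    ultimately have D0: "0 < D" by linarith
    have fo: "(a - ov) / ov * (real T + 1) = (x + e) * real u * (real T + 1) / D - (real T + 1)"
    proof -
      have ovD: "ov = D / (real u * (real T + 1))" unfolding ov_def D_def ..
      have ov0: "ov \<noteq> 0" unfolding ovD using D0 u0 by simp
      have "(a - ov) / ov = a / ov - 1" using ov0 by (simp add: diff_divide_distrib)
      moreover have "a / ov = (x + e) * real u / D"
      proof -
        have T0: "real T + 1 \<noteq> 0" by simp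
        have "a / ov = (x + e) / (real T + 1) * (real u * (real T + 1) / D)"
          unfolding a_def ovD by simp
        also have "\<dots> = (x + e) * real u / D"
        proof -
          have Dn: "D \<noteq> 0" using D0 by simp
          show ?thesis using T0 Dn by (simp add: divide_simps)
        qed
        finally show ?thesis .
      qed
      ultimately have "(a - ov) / ov * (real T + 1) = ((x + e) * real u / D - 1) * (real T + 1)"
        by simp
      also have "\<dots> = (x + e) * real u * (real T + 1) / D - (real T + 1)"
        by (simp add: left_diff_distrib)
      finally show ?thesis .
    qed
    have Dk: "D \<le> real k * (real T + 1)" unfolding D_def using rk by (simp add: algebra_simps)
    have low: "real u / real k * x \<le> (x + e) * real u * (real T + 1) / D"
    proof -
      have "x * real u * (real T + 1) / (real k * (real T + 1)) = x * real u / real k"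
        by (rule mult_divide_mult_cancel_right) simp
      then have "real u / real k * x = x * real u * (real T + 1) / (real k * (real T + 1))"
        by simp
      also have "\<dots> \<le> x * real u * (real T + 1) / D"
        using D0 Dk x0 u0 by (intro frac_le) auto
      also have "\<dots> \<le> (x + e) * real u * (real T + 1) / D"
        using D0 e0 u0 x0 by (intro divide_right_mono) (auto intro!: mult_right_mono)
      finally show ?thesis .
    qed
    have up: "(x + e) * real u * (real T + 1) / D \<le> real u / real k * x + 3 * real u"
    proof (cases "T = 0")
      case True
      then have x00: "x = 0" using x0 xT by simp
      have r1: "1 \<le> real r" using D0 True unfolding D_def by simp
      have "(x + e) * real u * (real T + 1) / D = e * real u / real r" using True x00 unfolding D_def by simp
      also have "\<dots> \<le> real u" using r1 e0 u0
        by (simp add: divide_le_eq)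
      finally show ?thesis using x00 u0 by simp
    next
      case False
      then have T1: "1 \<le> real T" by simp
      have kT: "0 < real k * real T" using k0 T1 by simp
      have kTD: "real k * real T \<le> D" unfolding D_def by simp
      have "(x + e) * real u * (real T + 1) / D \<le> (x + 1) * real u * (real T + 1) / (real k * real T)"
        using kT kTD e0 x0 u0 by (intro frac_le) (auto intro!: mult_right_mono)
      also have "\<dots> = real u / real k * ((x + 1) * (real T + 1) / real T)"
        using k0 T1 by (simp add: field_simps)
      also have "\<dots> \<le> real u / real k * (x + 3)"
      proof (intro mult_left_mono)
        show "(x + 1) * (real T + 1) / real T \<le> x + 3"
          using T1 xT by (simp add: divide_le_eq algebra_simps)
        show "0 \<le> real u / real k" by simp
      qed
      also have "\<dots> = real u / real k * x + 3 * (real u / real k)" by (simp add: distrib_left)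
      also have "\<dots> \<le> real u / real k * x + 3 * real u"
        using k1 u0 by (simp add: divide_le_eq)
      finally show ?thesis .
    qed
    show ?thesis using fo low up by simp
  qed
  then show "real u / real k * x - real T - 1 \<le> (a - ov) / ov * (real T + 1)"
    and "(a - ov) / ov * (real T + 1) \<le> real u / real k * x - real T + 3 * real u" by auto
qed

definition Lx :: "(nat \<Rightarrow> nat list) \<Rightarrow> nat \<Rightarrow> nat \<Rightarrow> nat \<Rightarrow> nat list" where
  "Lx A' T = (\<lambda>t. if t < T then H T t else A')"

definition ee :: "(nat \<Rightarrow> nat list) \<Rightarrow> nat \<Rightarrow> nat \<Rightarrow> real" where
  "ee A' i j = (if j \<in> set (A' i) then 1 else 0)"

lemma sum_rounds:
  assumes inv: "inv_ab A' cap'" and i: "i < n"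
  shows "(\<Sum>t\<le>T. one_delta i t * In_tn j (Lx A' T t i) N) = cnt T i j + ee A' i j"
proof -
  have tk: "take N (A' i) = A' i" using len_le[OF inv i] by simp
  have "(\<Sum>t\<le>T. one_delta i t * In_tn j (Lx A' T t i) N) = (\<Sum>t<Suc T. one_delta i t * In_tn j (Lx A' T t i) N)"
    by (simp add: lessThan_Suc_atMost)
  also have "\<dots> = (\<Sum>t<T. one_delta i t * In_tn j (Lx A' T t i) N) + one_delta i T * In_tn j (Lx A' T T i) N"
    by (rule sum.lessThan_Suc)
  also have "(\<Sum>t<T. one_delta i t * In_tn j (Lx A' T t i) N) = cnt T i j"
    unfolding cnt_def by (rule sum.cong) (auto simp: one_delta_def Lx_def)
  also have "one_delta i T * In_tn j (Lx A' T T i) N = ee A' i j"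
    by (simp add: one_delta_def Lx_def In_tn_def tk ee_def)
  finally show ?thesis .
qed

lemma act_eq:
  assumes inv: "inv_ab A' cap'" and i: "i < n"
  shows "actual_prob N one_delta (Lx A' T) T i j = (cnt T i j + ee A' i j) / (real T + 1)"
proof -
  have "(\<Sum>t\<le>T. one_delta i t) = real T + 1" by (simp add: one_delta_def)
  then show ?thesis unfolding actual_prob_def sum_rounds[OF inv i] by simp
qed

lemma ovr_eq:
  assumes inv: "inv_ab A' cap'"
  shows "overall_prob n N l one_delta (Lx A' T) T j =
     (real (kk j) * real T + real (card {i \<in> UU j. j \<in> set (A' i)})) / (real (card (UU j)) * (real T + 1))"
proof -
  have U: "Uset n N l j = UU j" by (simp add: UU_def)
  have "(\<Sum>i\<in>UU j. \<Sum>t\<le>T. one_delta i t * In_tn j (Lx A' T t i) N) = (\<Sum>i\<in>UU j. cnt T i j + ee A' i j)"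
    by (rule sum.cong) (auto simp: UU_iff intro!: sum_rounds[OF inv])
  also have "\<dots> = real (kk j) * real T + (\<Sum>i\<in>UU j. ee A' i j)" by (simp add: sum.distrib cnt_sum)
  also have "(\<Sum>i\<in>UU j. ee A' i j) = real (card {i \<in> UU j. j \<in> set (A' i)})"
    by (simp add: ee_def sum.If_cases Int_def)
  finally have num: "(\<Sum>i\<in>UU j. \<Sum>t\<le>T. one_delta i t * In_tn j (Lx A' T t i) N) =
      real (kk j) * real T + real (card {i \<in> UU j. j \<in> set (A' i)})" .
  have den: "(\<Sum>i\<in>UU j. \<Sum>t\<le>T. one_delta i t) = real (card (UU j)) * (real T + 1)"
    by (simp add: one_delta_def)
  show ?thesis unfolding overall_prob_def U num den ..
qed

lemma r_le:
  assumes inv: "inv_ab A' cap'"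
  shows "card {i \<in> UU j. j \<in> set (A' i)} \<le> kk j"
proof -
  have "card {i \<in> UU j. j \<in> set (A' i)} \<le> card (UU j)" by (rule card_mono) auto
  moreover have "card {i \<in> UU j. j \<in> set (A' i)} \<le> card {i. i < n \<and> j \<in> set (A' i)}"
    by (rule card_mono) (auto simp: UU_iff)
  moreover have "card {i. i < n \<and> j \<in> set (A' i)} \<le> c j" using inv unfolding inv_ab_def by (metis le_add2)
  ultimately show ?thesis unfolding kk_def by simp
qed

lemma ffast_key_eq:
  "ffast_key n N l (H T) T A' i = (\<Sum>j\<in>tp i. fairness_degree n N l one_delta (Lx A' T) T i j)"
  unfolding ffast_key_def topN_fairness_def Lx_def tp_def ..

lemma ww_le: assumes "0 < kk j" shows "ww j \<le> real n"
proof -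
  have "ww j \<le> real (card (UU j)) / 1" unfolding ww_def using assms by (intro divide_left_mono) auto
  also have "\<dots> \<le> real n" using card_UU by simp
  finally show ?thesis .
qed

lemma key_bounds:
  assumes inv: "inv_ab A' cap'" and i: "i < n"
  shows "GG T i - real N \<le> ffast_key n N l (H T) T A' i * (real T + 1)"
    and "ffast_key n N l (H T) T A' i * (real T + 1) \<le> GG T i + 3 * real n * real N"
proof -
  define fd where "fd j = fairness_degree n N l one_delta (Lx A' T) T i j" for j
  define P where "P = {j \<in> tp i. 0 < kk j}"
  have finP: "finite P" by (simp add: P_def)
  have cP: "real (card P) \<le> real N" using card_mono[of "tp i" P] card_tp[of i] by (simp add: P_def)
  have fd0: "fd j = 0" if "j \<in> tp i" "kk j = 0" for j
  proof -
    have "card {i \<in> UU j. j \<in> set (A' i)} = 0" using r_le[OF inv, of j] that by simp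
    then have "overall_prob n N l one_delta (Lx A' T) T j = 0" using ovr_eq[OF inv, of T j] that by simp
    then show ?thesis unfolding fd_def fairness_degree_def by simp
  qed
  have key: "ffast_key n N l (H T) T A' i * (real T + 1) = (\<Sum>j\<in>P. fd j * (real T + 1))"
  proof -
    have "ffast_key n N l (H T) T A' i * (real T + 1) = (\<Sum>j\<in>tp i. fd j * (real T + 1))"
      unfolding ffast_key_eq fd_def by (simp add: sum_distrib_right)
    also have "\<dots> = (\<Sum>j\<in>P. fd j * (real T + 1))"
      by (rule sum.mono_neutral_right) (auto simp: P_def fd0)
    finally show ?thesis .
  qed
  have tbj: "ww j * cnt T i j - real T - 1 \<le> fd j * (real T + 1) \<and>
             fd j * (real T + 1) \<le> ww j * cnt T i j - real T + 3 * real n" if j: "j \<in> P" for j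
  proof -
    have jt: "j \<in> tp i" and k1: "1 \<le> kk j" using j by (auto simp: P_def)
    have ku: "kk j \<le> card (UU j)" by (simp add: kk_def)
    have e: "ee A' i j = 0 \<or> ee A' i j = 1" by (simp add: ee_def)
    have fdj: "fd j = ((cnt T i j + ee A' i j) / (real T + 1) -
        (real (kk j) * real T + real (card {i \<in> UU j. j \<in> set (A' i)})) / (real (card (UU j)) * (real T + 1))) /
        ((real (kk j) * real T + real (card {i \<in> UU j. j \<in> set (A' i)})) / (real (card (UU j)) * (real T + 1)))"
      unfolding fd_def fairness_degree_def act_eq[OF inv i] ovr_eq[OF inv] ..
    note t = tb[OF cnt_nonneg[of T i j] cnt_le[of T i j] e r_le[OF inv, of j] k1 ku]
    have "real (card (UU j)) \<le> real n" using card_UU by simp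
    then show ?thesis using t unfolding fdj ww_def by linarith
  qed
  have "GG T i = (\<Sum>j\<in>P. ww j * cnt T i j - real T)" unfolding GG_def P_def ..
  note G = this
  have "GG T i - real N \<le> GG T i - real (card P)" using cP by simp
  also have "\<dots> = (\<Sum>j\<in>P. ww j * cnt T i j - real T - 1)" unfolding G by (simp add: sum_subtractf)
  also have "\<dots> \<le> (\<Sum>j\<in>P. fd j * (real T + 1))" using tbj by (intro sum_mono) blast
  finally show "GG T i - real N \<le> ffast_key n N l (H T) T A' i * (real T + 1)" unfolding key .
  have "(\<Sum>j\<in>P. fd j * (real T + 1)) \<le> (\<Sum>j\<in>P. ww j * cnt T i j - real T + 3 * real n)"
    using tbj by (intro sum_mono) blast
  also have "\<dots> = GG T i + 3 * real n * real (card P)" unfolding G by (simp add: sum.distrib)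
  also have "\<dots> \<le> GG T i + 3 * real n * real N" using cP by (simp add: mult_left_mono)
  finally show "ffast_key n N l (H T) T A' i * (real T + 1) \<le> GG T i + 3 * real n * real N" unfolding key .
qed

definition Kb :: "nat \<Rightarrow> (nat \<Rightarrow> real) \<Rightarrow> bool" where
  "Kb T f \<longleftrightarrow> (\<forall>i<n. GG T i - real N \<le> f i * (real T + 1) \<and> f i * (real T + 1) \<le> GG T i + 3 * real n * real N)"

lemma iter_kb: "inv_ab (fst (stk (H T) T k)) (fst (snd (stk (H T) T k))) \<and> Kb T (snd (snd (stk (H T) T k)))"
proof (induction k)
  case 0
  have inv0: "inv_ab (\<lambda>_. []) c" by (simp add: inv_ab_def)
  show ?case using key_bounds[OF inv0] by (simp add: st0_def inv0 Kb_def)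
next
  case (Suc k)
  obtain A cap f where st: "stk (H T) T k = (A, cap, f)" by (cases "stk (H T) T k") auto
  have eq: "stk (H T) T (Suc k) = ffast_step n N l (H T) T (A, cap, f)" using st by simp
  have inv: "inv_ab A cap" and kb: "Kb T f" using Suc st by auto
  from step_cases[where L="H T" and T=T and A=A and cap=cap and f=f] show ?case
  proof
    assume "E A cap = {} \<and> ffast_step n N l (H T) T (A, cap, f) = (A, cap, f)"
    then show ?case using eq inv kb by simp
  next
    assume "\<exists>i j. i \<in> E A cap \<and> (\<forall>k\<in>E A cap. f i \<le> f k) \<and> j \<in> tp i \<and> j \<notin> set (A i) \<and> 0 < cap j \<and>
      ffast_step n N l (H T) T (A, cap, f) = (A(i := A i @ [j]), cap(j := cap j - 1),
          f(i := ffast_key n N l (H T) T (A(i := A i @ [j])) i))"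
    then obtain i j where ij: "i \<in> E A cap" "j \<in> tp i" "j \<notin> set (A i)" "0 < cap j"
      and st': "ffast_step n N l (H T) T (A, cap, f) = (A(i := A i @ [j]), cap(j := cap j - 1),
          f(i := ffast_key n N l (H T) T (A(i := A i @ [j])) i))" by blast
    have i: "i < n" using ij E_sub by blast
    note inv' = inv_ab_step[OF inv i ij(2-4)]
    have kb': "Kb T (f(i := ffast_key n N l (H T) T (A(i := A i @ [j])) i))"
      using kb key_bounds[OF inv'] unfolding Kb_def by auto
    have new: "stk (H T) T (Suc k) = (A(i := A i @ [j]), cap(j := cap j - 1),
          f(i := ffast_key n N l (H T) T (A(i := A i @ [j])) i))" using eq st' by simp
    show ?case unfolding new fst_conv snd_conv using inv' kb' by blast
  qed
qed

definition gapped :: "nat \<Rightarrow> nat set \<Rightarrow> bool" where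
  "gapped T L \<longleftrightarrow> L \<subseteq> {..<n} \<and> (\<forall>a\<in>L. \<forall>b<n. b \<notin> L \<longrightarrow> GG T a + 3 * real n * real N + real N < GG T b)"

definition NS :: "nat set \<Rightarrow> (nat \<Rightarrow> nat list) \<Rightarrow> bool" where
  "NS L A \<longleftrightarrow> (\<forall>j b. b < n \<and> b \<notin> L \<and> j \<in> set (A b) \<longrightarrow> (\<forall>a\<in>L. j \<in> tp a \<longrightarrow> j \<in> set (A a)))"

lemma iter_ns:
  assumes g: "gapped T L"
  shows "NS L (fst (stk (H T) T k))"
proof (induction k)
  case 0
  show ?case by (simp add: st0_def NS_def)
next
  case (Suc k)
  obtain A cap f where st: "stk (H T) T k = (A, cap, f)" by (cases "stk (H T) T k") auto
  have eq: "stk (H T) T (Suc k) = ffast_step n N l (H T) T (A, cap, f)" using st by simp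
  have inv: "inv_ab A cap" and kb: "Kb T f" using iter_kb[where T=T and k=k] st by auto
  have ns: "NS L A" using Suc st by simp
  from step_cases[where L="H T" and T=T and A=A and cap=cap and f=f] show ?case
  proof
    assume "E A cap = {} \<and> ffast_step n N l (H T) T (A, cap, f) = (A, cap, f)"
    then show ?case using eq ns by simp
  next
    assume "\<exists>i j. i \<in> E A cap \<and> (\<forall>k\<in>E A cap. f i \<le> f k) \<and> j \<in> tp i \<and> j \<notin> set (A i) \<and> 0 < cap j \<and>
      ffast_step n N l (H T) T (A, cap, f) = (A(i := A i @ [j]), cap(j := cap j - 1),
          f(i := ffast_key n N l (H T) T (A(i := A i @ [j])) i))"
    then obtain i j where ij: "i \<in> E A cap" "\<forall>k\<in>E A cap. f i \<le> f k" "j \<in> tp i" "j \<notin> set (A i)" "0 < cap j"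
      and st': "ffast_step n N l (H T) T (A, cap, f) = (A(i := A i @ [j]), cap(j := cap j - 1),
          f(i := ffast_key n N l (H T) T (A(i := A i @ [j])) i))" by blast
    have i: "i < n" using ij E_sub by blast
    define A' where "A' = A(i := A i @ [j])"
    have new: "fst (stk (H T) T (Suc k)) = A'" using eq st' unfolding A'_def by simp
    have mono: "set (A x) \<subseteq> set (A' x)" for x unfolding A'_def by auto
    have "NS L A'" unfolding NS_def
    proof (intro allI impI ballI)
      fix j' b a
      assume bj: "b < n \<and> b \<notin> L \<and> j' \<in> set (A' b)" and a: "a \<in> L" "j' \<in> tp a"
      show "j' \<in> set (A' a)"
      proof (cases "b = i \<and> j' = j")
        case False
        then have "j' \<in> set (A b)" using bj unfolding A'_def by (auto split: if_splits)
        then have "j' \<in> set (A a)" using ns bj a unfolding NS_def by blast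
        then show ?thesis using mono by blast
      next
        case True
        show ?thesis
        proof (rule ccontr)
          assume nin: "j' \<notin> set (A' a)"
          then have nA: "j \<notin> set (A a)" using mono True by blast
          have an: "a < n" using a g unfolding gapped_def by blast
          have "a \<in> E A cap" using an a True nA ij(5) unfolding ffast_eligible_def tp_def by auto
          then have le: "f i \<le> f a" using ij(2) by blast
          have "GG T a + 3 * real n * real N + real N < GG T i" using g a i bj True unfolding gapped_def by blast
          moreover have "f a * (real T + 1) \<le> GG T a + 3 * real n * real N" using kb an unfolding Kb_def by blast
          moreover have "GG T i - real N \<le> f i * (real T + 1)" using kb i unfolding Kb_def by blast
          ultimately have "f a * (real T + 1) < f i * (real T + 1)" by linarith
          then have "f a < f i" by (simp add: mult_less_cancel_right)
          then show False using le by simp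
        qed
      qed
    qed
    then show ?case using new by simp
  qed
qed

lemma final_full:
  fixes T :: nat
  defines "A \<equiv> fst (stk (H T) T (n * N))"
  shows "\<exists>cap. inv_ab A cap \<and> E A cap = {}"
    "\<And>i. i < n \<Longrightarrow> j \<in> tp i \<Longrightarrow> In_tn j (ffast_round n N l c (H T) T i) N = ee A i j"
proof -
  show ex: "\<exists>cap. inv_ab A cap \<and> E A cap = {}" using final_props(1)[of T] unfolding A_def .
  then obtain cap where inv: "inv_ab A cap" by blast
  fix i assume "i < n" "j \<in> tp i"
  then show "In_tn j (ffast_round n N l c (H T) T i) N = ee A i j"
    using final_props(2)[of T i] In_final[OF inv] unfolding A_def ee_def by simp
qed

lemma GG_Suc:
  fixes T :: nat
  defines "A \<equiv> fst (stk (H T) T (n * N))"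
  assumes i: "i < n"
  shows "GG (Suc T) i = GG T i + (\<Sum>j\<in>{j \<in> tp i. 0 < kk j}. ww j * ee A i j - 1)"
proof -
  have "GG (Suc T) i = (\<Sum>j\<in>{j \<in> tp i. 0 < kk j}. (ww j * cnt T i j - real T) + (ww j * ee A i j - 1))"
    unfolding GG_def
  proof (rule sum.cong[OF refl])
    fix j assume "j \<in> {j \<in> tp i. 0 < kk j}"
    then have "In_tn j (ffast_round n N l c (H T) T i) N = ee A i j" using final_full(2)[OF i] unfolding A_def by blast
    then show "ww j * cnt (Suc T) i j - real (Suc T) = (ww j * cnt T i j - real T) + (ww j * ee A i j - 1)"
      unfolding cnt_Suc by (simp add: algebra_simps)
  qed
  also have "\<dots> = GG T i + (\<Sum>j\<in>{j \<in> tp i. 0 < kk j}. ww j * ee A i j - 1)"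
    unfolding GG_def by (rule sum.distrib)
  finally show ?thesis .
qed

lemma ww_kk: "0 < kk j \<Longrightarrow> ww j * real (kk j) = real (card (UU j))"
  unfolding ww_def by simp

lemma ww_ge1: "0 < kk j \<Longrightarrow> 1 \<le> ww j"
  unfolding ww_def by (simp add: kk_def)

lemma gain_j:
  assumes g: "gapped T L" and inv: "inv_ab A cap" and e: "E A cap = {}" and ns: "NS L A"
  shows "0 \<le> (\<Sum>a\<in>{a \<in> L. j \<in> tp a \<and> 0 < kk j}. ww j * ee A a j - 1)"
proof (cases "0 < kk j")
  case False
  then show ?thesis by simp
next
  case True
  define Lj where "Lj = {a \<in> L. j \<in> tp a}"
  define got where "got = {a \<in> Lj. j \<in> set (A a)}"
  have Ln: "L \<subseteq> {..<n}" using g unfolding gapped_def by blast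
  have finL: "finite L" using Ln finite_subset by blast
  have finLj: "finite Lj" using finL unfolding Lj_def by simp
  have set_eq: "{a \<in> L. j \<in> tp a \<and> 0 < kk j} = Lj" using True unfolding Lj_def by simp
  have "(\<Sum>a\<in>Lj. ww j * ee A a j - 1) = ww j * (\<Sum>a\<in>Lj. ee A a j) - real (card Lj)"
    by (simp add: sum_subtractf sum_distrib_left)
  also have "(\<Sum>a\<in>Lj. ee A a j) = real (card got)"
    unfolding got_def ee_def using finLj by (simp add: sum.If_cases Int_def)
  finally have S: "(\<Sum>a\<in>Lj. ww j * ee A a j - 1) = ww j * real (card got) - real (card Lj)" .
  have LjU: "Lj \<subseteq> UU j" using Ln unfolding Lj_def by (auto simp: UU_iff)
  have "real (card Lj) \<le> ww j * real (card got)"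
  proof (cases "got = Lj")
    case True
    then show ?thesis using ww_ge1[OF \<open>0 < kk j\<close>] by (simp add: mult_le_cancel_right1)
  next
    case False
    then obtain a where a: "a \<in> Lj" "j \<notin> set (A a)" unfolding got_def by blast
    have an: "a < n" using a Ln unfolding Lj_def by blast
    have cap0: "cap j = 0"
    proof (rule ccontr)
      assume "cap j \<noteq> 0"
      then have "a \<in> E A cap" using an a unfolding ffast_eligible_def Lj_def tp_def by auto
      then show False using e by simp
    qed
    have sub: "\<forall>i<n. set (A i) \<subseteq> tp i" using inv unfolding inv_ab_def by blast
    have "{i. i < n \<and> j \<in> set (A i)} = got"
    proof (intro set_eqI iffI)
      fix i assume i: "i \<in> {i. i < n \<and> j \<in> set (A i)}"
      have "i \<in> L"
      proof (rule ccontr)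
        assume "i \<notin> L"
        then have "j \<in> set (A a)" using ns i a unfolding NS_def Lj_def by blast
        then show False using a by simp
      qed
      then show "i \<in> got" using i sub unfolding got_def Lj_def by blast
    next
      fix i assume "i \<in> got"
      then show "i \<in> {i. i < n \<and> j \<in> set (A i)}" using Ln unfolding got_def Lj_def by blast
    qed
    moreover have "cap j + card {i. i < n \<and> j \<in> set (A i)} = c j" using inv unfolding inv_ab_def by blast
    ultimately have "card got = c j" using cap0 by simp
    then have "kk j \<le> card got" unfolding kk_def by simp
    then have "ww j * real (kk j) \<le> ww j * real (card got)"
      using ww_ge1[OF \<open>0 < kk j\<close>] by (intro mult_left_mono) auto
    moreover have "real (card Lj) \<le> real (card (UU j))" using card_mono[OF _ LjU] by simp
    ultimately show ?thesis using ww_kk[OF \<open>0 < kk j\<close>] by linarith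
  qed
  then show ?thesis unfolding set_eq S by simp
qed

lemma gain:
  assumes g: "gapped T L"
  shows "(\<Sum>a\<in>L. GG T a) \<le> (\<Sum>a\<in>L. GG (Suc T) a)"
proof -
  define A where "A = fst (stk (H T) T (n * N))"
  obtain cap where inv: "inv_ab A cap" and e: "E A cap = {}" using final_full(1)[of T] unfolding A_def by blast
  have ns: "NS L A" using iter_ns[OF g] unfolding A_def by blast
  have Ln: "L \<subseteq> {..<n}" using g unfolding gapped_def by blast
  have finL: "finite L" using Ln finite_subset by blast
  define g' where "g' a j = ww j * ee A a j - 1" for a j
  have "(\<Sum>a\<in>L. GG (Suc T) a) = (\<Sum>a\<in>L. GG T a + (\<Sum>j\<in>{j \<in> tp a. 0 < kk j}. g' a j))"
    using Ln by (intro sum.cong refl) (auto simp: GG_Suc A_def g'_def)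
  also have "\<dots> = (\<Sum>a\<in>L. GG T a) + (\<Sum>a\<in>L. \<Sum>j\<in>{j \<in> {..<m}. j \<in> tp a \<and> 0 < kk j}. g' a j)"
  proof -
    have "(\<Sum>a\<in>L. \<Sum>j\<in>{j \<in> tp a. 0 < kk j}. g' a j) = (\<Sum>a\<in>L. \<Sum>j\<in>{j \<in> {..<m}. j \<in> tp a \<and> 0 < kk j}. g' a j)"
    proof (intro sum.cong refl)
      fix a assume "a \<in> L"
      then have "tp a \<subseteq> {..<m}" using Ln tp_sub by blast
      then show "{j \<in> tp a. 0 < kk j} = {j \<in> {..<m}. j \<in> tp a \<and> 0 < kk j}" by blast
    qed
    then show ?thesis by (simp add: sum.distrib)
  qed
  also have "(\<Sum>a\<in>L. \<Sum>j\<in>{j \<in> {..<m}. j \<in> tp a \<and> 0 < kk j}. g' a j) =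
      (\<Sum>j\<in>{..<m}. \<Sum>a\<in>{a \<in> L. j \<in> tp a \<and> 0 < kk j}. g' a j)"
    using finL by (intro sum.swap_restrict) auto
  finally have eq: "(\<Sum>a\<in>L. GG (Suc T) a) = (\<Sum>a\<in>L. GG T a) +
      (\<Sum>j\<in>{..<m}. \<Sum>a\<in>{a \<in> L. j \<in> tp a \<and> 0 < kk j}. g' a j)" .
  have "0 \<le> (\<Sum>j\<in>{..<m}. \<Sum>a\<in>{a \<in> L. j \<in> tp a \<and> 0 < kk j}. g' a j)"
    unfolding g'_def by (intro sum_nonneg gain_j[OF g inv e ns])
  then show ?thesis using eq by simp
qed

lemma GG_step_bounds:
  assumes i: "i < n"
  shows "GG T i - real n * real N \<le> GG (Suc T) i" and "GG (Suc T) i \<le> GG T i + real n * real N"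
proof -
  define A where "A = fst (stk (H T) T (n * N))"
  define P where "P = {j \<in> tp i. 0 < kk j}"
  have cP: "real (card P) \<le> real N" using card_mono[of "tp i" P] card_tp[of i] by (simp add: P_def)
  have G: "GG (Suc T) i = GG T i + (\<Sum>j\<in>P. ww j * ee A i j - 1)" using GG_Suc[OF i] unfolding A_def P_def .
  have t: "-1 \<le> ww j * ee A i j - 1 \<and> ww j * ee A i j - 1 \<le> real n" if "j \<in> P" for j
  proof -
    have k: "0 < kk j" using that by (simp add: P_def)
    have "ww j \<le> real n" using ww_le[OF k] .
    moreover have "1 \<le> ww j" using ww_ge1[OF k] .
    ultimately show ?thesis by (auto simp: ee_def)
  qed
  have "(\<Sum>j\<in>P. -1) \<le> (\<Sum>j\<in>P. ww j * ee A i j - 1)" using t by (intro sum_mono) blast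
  then have "- real (card P) \<le> (\<Sum>j\<in>P. ww j * ee A i j - 1)" by simp
  moreover have "real N \<le> real n * real N"
  proof -
    have "1 \<le> real n" using npos by simp
    then show ?thesis using mult_right_mono[of 1 "real n" "real N"] by simp
  qed
  ultimately show "GG T i - real n * real N \<le> GG (Suc T) i" using G cP by linarith
  have "(\<Sum>j\<in>P. ww j * ee A i j - 1) \<le> (\<Sum>j\<in>P. real n)" using t by (intro sum_mono) blast
  moreover have "(\<Sum>j\<in>P. real n) \<le> real n * real N"
    using cP mult_left_mono[OF cP, of "real n"] by (simp add: mult.commute)
  ultimately have "(\<Sum>j\<in>P. ww j * ee A i j - 1) \<le> real n * real N" by linarith
  then show "GG (Suc T) i \<le> GG T i + real n * real N" using G by linarith
qed

lemma GG_sum0: "(\<Sum>i<n. GG T i) = 0"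
proof -
  define g where "g i j = ww j * cnt T i j - real T" for i j
  have "(\<Sum>i<n. GG T i) = (\<Sum>i<n. \<Sum>j\<in>{j \<in> {..<m}. j \<in> tp i \<and> 0 < kk j}. g i j)"
  proof (intro sum.cong refl)
    fix i assume "i \<in> {..<n}"
    then have "tp i \<subseteq> {..<m}" using tp_sub by blast
    then have "{j \<in> tp i. 0 < kk j} = {j \<in> {..<m}. j \<in> tp i \<and> 0 < kk j}" by blast
    then show "GG T i = (\<Sum>j\<in>{j \<in> {..<m}. j \<in> tp i \<and> 0 < kk j}. g i j)" unfolding GG_def g_def by simp
  qed
  also have "\<dots> = (\<Sum>j\<in>{..<m}. \<Sum>i\<in>{i \<in> {..<n}. j \<in> tp i \<and> 0 < kk j}. g i j)"
    by (intro sum.swap_restrict) auto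
  also have "\<dots> = (\<Sum>j\<in>{..<m}. 0)"
  proof (intro sum.cong refl)
    fix j
    show "(\<Sum>i\<in>{i \<in> {..<n}. j \<in> tp i \<and> 0 < kk j}. g i j) = 0"
    proof (cases "0 < kk j")
      case False then show ?thesis by simp
    next
      case True
      have se: "{i \<in> {..<n}. j \<in> tp i \<and> 0 < kk j} = UU j" using True by (auto simp: UU_iff)
      have "(\<Sum>i\<in>UU j. g i j) = ww j * (\<Sum>i\<in>UU j. cnt T i j) - real (card (UU j)) * real T"
        unfolding g_def by (simp add: sum_subtractf sum_distrib_left)
      also have "\<dots> = 0" unfolding cnt_sum using ww_kk[OF True]
        by (simp add: mult.assoc[symmetric])
      finally show ?thesis unfolding se .
    qed
  qed
  finally show ?thesis by simp
qed

definition DD :: real where "DD = real n * real N"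
definition CC :: real where "CC = 3 * real n * real N + real N"
definition EB :: real where "EB = real n * DD + CC"
definition BB :: "real \<Rightarrow> real" where "BB x = EB * x * (real n - x)"

lemma DD_nn: "0 \<le> DD" by (simp add: DD_def)
lemma CC_nn: "0 \<le> CC" by (simp add: CC_def)
lemma EB_nn: "0 \<le> EB" using DD_nn CC_nn by (simp add: EB_def)

lemma GG0: "GG 0 i = 0" by (simp add: GG_def cnt_def)

lemma sum_step_low:
  assumes "S \<subseteq> {..<n}"
  shows "(\<Sum>i\<in>S. GG T i) - real (card S) * DD \<le> (\<Sum>i\<in>S. GG (Suc T) i)"
proof -
  have "(\<Sum>i\<in>S. GG T i - DD) \<le> (\<Sum>i\<in>S. GG (Suc T) i)"
    using assms GG_step_bounds(1) unfolding DD_def by (intro sum_mono) blast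
  then show ?thesis by (simp add: sum_subtractf)
qed

lemma potential: "\<forall>S. S \<subseteq> {..<n} \<longrightarrow> - BB (real (card S)) \<le> (\<Sum>i\<in>S. GG T i)"
proof (induction T)
  case 0
  show ?case
  proof (intro allI impI)
    fix S :: "nat set" assume S: "S \<subseteq> {..<n}"
    have "card S \<le> n" using card_mono[OF _ S] by simp
    then have "0 \<le> BB (real (card S))" unfolding BB_def using EB_nn by simp
    then show "- BB (real (card S)) \<le> (\<Sum>i\<in>S. GG 0 i)" by (simp add: GG0)
  qed
next
  case (Suc T)
  note IH = Suc.IH
  show ?case
  proof (intro allI impI)
    fix S :: "nat set" assume S: "S \<subseteq> {..<n}"
    have finS: "finite S" using S finite_subset by blast
    define k where "k = card S"
    have kn: "k \<le> n" using card_mono[OF _ S] unfolding k_def by simp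
    show "- BB (real (card S)) \<le> (\<Sum>i\<in>S. GG (Suc T) i)"
    proof (cases "k = 0 \<or> k = n")
      case True
      then show ?thesis
      proof
        assume "k = 0"
        then have "S = {}" using finS unfolding k_def by simp
        then show ?thesis by (simp add: BB_def)
      next
        assume "k = n"
        then have "card S = card {..<n}" unfolding k_def by simp
        then have "S = {..<n}" using card_subset_eq[OF finite_lessThan S] by simp
        then show ?thesis using GG_sum0[of "Suc T"] by (simp add: BB_def)
      qed
    next
      case False
      then have k1: "1 \<le> k" "k < n" using kn by auto
      have IHS: "- BB (real k) \<le> (\<Sum>i\<in>S. GG T i)" using IH S unfolding k_def by blast
      show ?thesis
      proof (cases "- BB (real k) + real k * DD \<le> (\<Sum>i\<in>S. GG T i)")
        case True
        then show ?thesis using sum_step_low[OF S, of T] unfolding k_def by linarith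
      next
        case False
        have g: "gapped T S" unfolding gapped_def
        proof (intro conjI S ballI allI impI)
          fix a b assume a: "a \<in> S" and b: "b < n" "b \<notin> S"
          show "GG T a + 3 * real n * real N + real N < GG T b"
          proof (rule ccontr)
            assume "\<not> ?thesis"
            then have gb: "GG T b \<le> GG T a + CC" unfolding CC_def by linarith
            have S1: "S - {a} \<subseteq> {..<n}" using S by blast
            have c1: "real (card (S - {a})) = real k - 1" using a finS k1 unfolding k_def by simp
            have s1: "(\<Sum>i\<in>S. GG T i) = GG T a + (\<Sum>i\<in>S - {a}. GG T i)" using a finS by (intro sum.remove) auto
            have "- BB (real (card (S - {a}))) \<le> (\<Sum>i\<in>S - {a}. GG T i)" using IH S1 by blast
            then have h1: "- BB (real k - 1) \<le> (\<Sum>i\<in>S - {a}. GG T i)" using c1 by simp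
            have S2: "insert b S \<subseteq> {..<n}" using S b by blast
            have c2: "real (card (insert b S)) = real k + 1" using b finS unfolding k_def by simp
            have s2: "(\<Sum>i\<in>insert b S. GG T i) = GG T b + (\<Sum>i\<in>S. GG T i)" using b finS by simp
            have "- BB (real (card (insert b S))) \<le> (\<Sum>i\<in>insert b S. GG T i)" using IH S2 by blast
            then have h2: "- BB (real k + 1) \<le> (\<Sum>i\<in>insert b S. GG T i)" using c2 by simp
            have alg: "BB (real k + 1) + BB (real k - 1) - 2 * BB (real k) = - 2 * EB"
              unfolding BB_def by (simp add: algebra_simps)
            have "2 * real k * DD \<le> 2 * real n * DD" using kn DD_nn by (simp add: mult_right_mono)
            then have bound: "2 * real k * DD + CC \<le> 2 * EB" unfolding EB_def using CC_nn by simp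
            show False using False gb s1 h1 s2 h2 alg bound by linarith
          qed
        qed
        have "(\<Sum>i\<in>S. GG T i) \<le> (\<Sum>i\<in>S. GG (Suc T) i)" by (rule gain[OF g])
        then show ?thesis using IHS unfolding k_def by linarith
      qed
    qed
  qed
qed

lemma GG_bound: assumes i: "i < n" shows "\<bar>GG T i\<bar> \<le> EB * (real n - 1)"
proof -
  have "{i} \<subseteq> {..<n}" using i by simp
  then have "- BB (real (card {i})) \<le> (\<Sum>j\<in>{i}. GG T j)" using potential[of T] by blast
  then have h1: "- BB 1 \<le> GG T i" by simp
  have sub2: "{..<n} - {i} \<subseteq> {..<n}" by blast
  have p2: "- BB (real (card ({..<n} - {i}))) \<le> (\<Sum>j\<in>{..<n} - {i}. GG T j)" using potential[of T] sub2 by blast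
  have "card ({..<n} - {i}) = n - 1" using i by (simp add: card_Diff_singleton)
  then have "real (card ({..<n} - {i})) = real n - 1" using i by (simp add: of_nat_diff)
  then have h2: "- BB (real n - 1) \<le> (\<Sum>j\<in>{..<n} - {i}. GG T j)" using p2 by simp
  have h3: "(\<Sum>j<n. GG T j) = GG T i + (\<Sum>j\<in>{..<n} - {i}. GG T j)" using i by (intro sum.remove) auto
  have h4: "BB 1 = EB * (real n - 1)" by (simp add: BB_def)
  have h5: "BB (real n - 1) = EB * (real n - 1)" by (simp add: BB_def)
  show ?thesis using GG_sum0[of T] h1 h2 h3 h4 h5 unfolding abs_le_iff by linarith
qed

lemma H_stable: "t < T \<Longrightarrow> H T t = H (Suc t) t"
proof (induction T)
  case 0 then show ?case by simp
next
  case (Suc T)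
  show ?case
  proof (cases "t = T")
    case True then show ?thesis by simp
  next
    case False
    then have "t < T" using Suc.prems by simp
    then show ?thesis using Suc.IH by (simp add: H_Suc)
  qed
qed

lemma lists_sum: "(\<Sum>t\<le>T. one_delta i t * In_tn j (ffast_lists n N l c t i) N) = cnt (Suc T) i j"
proof -
  have "(\<Sum>t\<le>T. one_delta i t * In_tn j (ffast_lists n N l c t i) N) =
        (\<Sum>t<Suc T. one_delta i t * In_tn j (ffast_lists n N l c t i) N)"
    by (simp add: lessThan_Suc_atMost)
  also have "\<dots> = cnt (Suc T) i j" unfolding cnt_def
  proof (rule sum.cong[OF refl])
    fix t assume "t \<in> {..<Suc T}"
    then have "H (Suc T) t = H (Suc t) t" using H_stable by simp
    then show "one_delta i t * In_tn j (ffast_lists n N l c t i) N = In_tn j (H (Suc T) t i) N"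
      by (simp add: ffast_lists_def one_delta_def)
  qed
  finally show ?thesis .
qed

lemma F_eq:
  assumes i: "i < n"
  shows "topN_fairness n N l one_delta (ffast_lists n N l c) T i = GG (Suc T) i / (real T + 1)"
proof -
  define fd where "fd j = fairness_degree n N l one_delta (ffast_lists n N l c) T i j" for j
  define P where "P = {j \<in> tp i. 0 < kk j}"
  have act: "actual_prob N one_delta (ffast_lists n N l c) T i j = cnt (Suc T) i j / (real T + 1)" for j
  proof -
    have "(\<Sum>t\<le>T. one_delta i t) = real T + 1" by (simp add: one_delta_def)
    then show ?thesis unfolding actual_prob_def lists_sum by simp
  qed
  have ovr: "overall_prob n N l one_delta (ffast_lists n N l c) T j =
      real (kk j) * (real T + 1) / (real (card (UU j)) * (real T + 1))" for j
  proof -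
    have U: "Uset n N l j = UU j" by (simp add: UU_def)
    have "(\<Sum>i\<in>UU j. \<Sum>t\<le>T. one_delta i t * In_tn j (ffast_lists n N l c t i) N) = real (kk j) * (real T + 1)"
      unfolding lists_sum cnt_sum by simp
    moreover have "(\<Sum>i\<in>UU j. \<Sum>t\<le>T. one_delta i t) = real (card (UU j)) * (real T + 1)"
      by (simp add: one_delta_def)
    ultimately show ?thesis unfolding overall_prob_def U by simp
  qed
  have fd0: "fd j = 0" if "kk j = 0" for j using that unfolding fd_def fairness_degree_def ovr by simp
  have fdP: "fd j = (ww j * cnt (Suc T) i j - real (Suc T)) / (real T + 1)" if "j \<in> P" for j
  proof -
    have k: "0 < real (kk j)" using that by (simp add: P_def)
    have ku: "kk j \<le> card (UU j)" by (simp add: kk_def)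
    then have u: "0 < real (card (UU j))" using k by linarith
    have T0: "0 < real T + 1" by simp
    have o: "real (kk j) * (real T + 1) / (real (card (UU j)) * (real T + 1)) = real (kk j) / real (card (UU j))"
      using T0 by (simp add: mult_divide_mult_cancel_right)
    have un: "real (card (UU j)) \<noteq> 0" and kn: "real (kk j) \<noteq> 0" and Tn: "real T + 1 \<noteq> 0"
      using u k T0 by auto
    have alg: "(x / T1 - k / u) / (k / u) = (u / k * x - T1) / T1"
      if "u \<noteq> 0" "k \<noteq> 0" "T1 \<noteq> 0" for x T1 k u :: real
      using that by (simp add: field_simps)
    show ?thesis unfolding fd_def fairness_degree_def act ovr o ww_def alg[OF un kn Tn]
      by simp
  qed
  have "topN_fairness n N l one_delta (ffast_lists n N l c) T i = (\<Sum>j\<in>tp i. fd j)"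
    unfolding topN_fairness_def fd_def tp_def ..
  also have "\<dots> = (\<Sum>j\<in>P. fd j)"
    by (rule sum.mono_neutral_right) (auto simp: P_def fd0)
  also have "\<dots> = (\<Sum>j\<in>P. (ww j * cnt (Suc T) i j - real (Suc T)) / (real T + 1))"
    by (rule sum.cong) (auto simp: fdP)
  also have "\<dots> = GG (Suc T) i / (real T + 1)"
    unfolding GG_def P_def by (simp add: sum_divide_distrib)
  finally show ?thesis .
qed

end

lemma var_bound:
  fixes F :: "nat \<Rightarrow> real" and n :: nat and \<epsilon> :: real
  assumes n: "0 < n" and b: "\<forall>i<n. \<bar>F i\<bar> \<le> \<epsilon>"
  shows "0 \<le> fairness_variance n F" and "fairness_variance n F \<le> 4 * \<epsilon>\<^sup>2"
proof -
  define \<mu> where "\<mu> = (1 / real n) * (\<Sum>k<n. F k)"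
  have "\<bar>\<Sum>k<n. F k\<bar> \<le> (\<Sum>k<n. \<bar>F k\<bar>)" by (rule sum_abs)
  also have "\<dots> \<le> (\<Sum>k<n. \<epsilon>)" using b by (intro sum_mono) simp
  finally have "\<bar>\<Sum>k<n. F k\<bar> \<le> real n * \<epsilon>" by simp
  then have mu: "\<bar>\<mu>\<bar> \<le> \<epsilon>" unfolding \<mu>_def using n by (simp add: abs_mult divide_le_eq mult.commute)
  have sq: "(F i - \<mu>)\<^sup>2 \<le> (2 * \<epsilon>)\<^sup>2" if "i < n" for i
  proof -
    have f: "\<bar>F i\<bar> \<le> \<epsilon>" using b that by blast
    have "\<bar>F i - \<mu>\<bar> \<le> 2 * \<epsilon>" using f mu unfolding abs_le_iff by linarith
    then have "\<bar>F i - \<mu>\<bar>\<^sup>2 \<le> (2 * \<epsilon>)\<^sup>2" by (intro power_mono) auto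
    then show ?thesis by simp
  qed
  have "(\<Sum>i<n. (F i - \<mu>)\<^sup>2) \<le> (\<Sum>i<n. (2 * \<epsilon>)\<^sup>2)" using sq by (intro sum_mono) simp
  then have "(\<Sum>i<n. (F i - \<mu>)\<^sup>2) \<le> real n * (4 * \<epsilon>\<^sup>2)" by (simp add: power_mult_distrib)
  then have "(1 / real n) * (\<Sum>i<n. (F i - \<mu>)\<^sup>2) \<le> 4 * \<epsilon>\<^sup>2" using n
    by (simp add: divide_le_eq mult.commute)
  then show "fairness_variance n F \<le> 4 * \<epsilon>\<^sup>2" unfolding fairness_variance_def \<mu>_def .
  show "0 \<le> fairness_variance n F" unfolding fairness_variance_def
    by (intro mult_nonneg_nonneg sum_nonneg) auto
qed

theorem theorem2:
  fixes n m N :: nat and c :: "nat \<Rightarrow> nat" and l :: "nat \<Rightarrow> nat list"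
  assumes "0 < n"
    and "\<forall>i<n. distinct (l i) \<and> set (l i) = {..<m}"
  shows "(\<lambda>T. fairness_variance n
            (\<lambda>i. topN_fairness n N l one_delta (ffast_lists n N l c) T i))
         \<longlonglongrightarrow> 0"
proof -
  interpret ff n m N c l using assms by unfold_locales
  define M where "M = EB * (real n - 1)"
  define \<epsilon> where "\<epsilon> T = M * inverse (real (Suc T))" for T :: nat
  have bd: "\<forall>i<n. \<bar>topN_fairness n N l one_delta (ffast_lists n N l c) T i\<bar> \<le> \<epsilon> T" for T
  proof (intro allI impI)
    fix i assume i: "i < n"
    have "\<bar>GG (Suc T) i / (real T + 1)\<bar> = \<bar>GG (Suc T) i\<bar> / (real T + 1)" by simp
    also have "\<dots> \<le> M / (real T + 1)" using GG_bound[OF i, of "Suc T"] unfolding M_def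
      by (intro divide_right_mono) auto
    finally show "\<bar>topN_fairness n N l one_delta (ffast_lists n N l c) T i\<bar> \<le> \<epsilon> T"
      unfolding F_eq[OF i] \<epsilon>_def by (simp add: divide_inverse add.commute)
  qed
  have e0: "\<epsilon> \<longlonglongrightarrow> 0" unfolding \<epsilon>_def
    using tendsto_mult[OF tendsto_const LIMSEQ_inverse_real_of_nat, of M] by simp
  have e2: "(\<lambda>T. 4 * (\<epsilon> T)\<^sup>2) \<longlonglongrightarrow> 0"
    using tendsto_mult[OF tendsto_const tendsto_power[OF e0, of 2], of 4] by simp
  show ?thesis
    by (rule real_tendsto_sandwich[where f="\<lambda>_. 0" and h="\<lambda>T. 4 * (\<epsilon> T)\<^sup>2"])
       (use var_bound[OF assms(1) bd] e2 in auto)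
qed

end
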